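(* For every integer $p\geq1$ and every $\alpha>0$ there exists $C=C(\alpha,p)>0$ such that the following holds. Let $\pi$ be the Ising measure on $N$ spins (no external field) with couplings $\{J_{ij}\}$, and let $\tilde\pi$ be the Ising measure with couplings $\{|J_{ij}|\}$. Suppose $\tilde\pi$ is $(1-\alpha/N)$-contracting. Let $B=(b_{i_1,\dots,i_p})$ be a real tensor of order $p$ indexed by $\{1,\dots,N\}^p$ and $h(\sigma)=\sum_{i_1,\dots,i_p}b_{i_1,\dots,i_p}\sigma_{i_1}\cdots\sigma_{i_p}$. Then $$|\mathbb E_\pi[h(\sigma)]|\leq C\,\|B\|_\infty\,N^{p/2},$$ where $\|B\|_\infty=\max_{i_1,\dots,i_p}|b_{i_1,\dots,i_p}|$.
   Context: Spin configurations are $\sigma\in\Omega_N=\{\pm1\}^N$. For real couplings $\{J_{ij}\}$, the Ising measure (no external field) is $\pi(\sigma)=\mathcal Z^{-1}\exp\big(\sum_{i,j}J_{ij}\sigma_i\sigma_j\big)$. An Ising measure is $\theta$-contracting if there is a discrete-time Markov chain on $\Omega_N$ with that stationary measure, changing at most one coordinate per step, such that $\max_{\sigma,\sigma':\|\sigma-\sigma'\|_1=1}W_1(\mathbb P_\sigma(X_1\in\cdot),\mathbb P_{\sigma'}(X_1\in\cdot))\leq\theta<1$, with $W_1$ the $L^1$-Wasserstein distance w.r.t. $\|\cdot\|_1$. *)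

theory Defs
  imports "HOL-Analysis.Analysis"
begin

type_synonym spin = "nat \<Rightarrow> real"

definition Omega :: "nat \<Rightarrow> spin set" where
  "Omega N = {\<sigma>. (\<forall>i<N. \<sigma> i = 1 \<or> \<sigma> i = -1) \<and> (\<forall>i\<ge>N. \<sigma> i = 0)}"

definition ising_weight :: "nat \<Rightarrow> (nat \<Rightarrow> nat \<Rightarrow> real) \<Rightarrow> spin \<Rightarrow> real" where
  "ising_weight N J \<sigma> = exp (\<Sum>i<N. \<Sum>j<N. J i j * \<sigma> i * \<sigma> j)"

definition ising :: "nat \<Rightarrow> (nat \<Rightarrow> nat \<Rightarrow> real) \<Rightarrow> spin \<Rightarrow> real" where
  "ising N J \<sigma> = ising_weight N J \<sigma> / (\<Sum>\<tau>\<in>Omega N. ising_weight N J \<tau>)"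

definition ham :: "nat \<Rightarrow> spin \<Rightarrow> spin \<Rightarrow> real" where
  "ham N \<sigma> \<tau> = real (card {i. i < N \<and> \<sigma> i \<noteq> \<tau> i})"

definition is_coupling :: "nat \<Rightarrow> (spin \<Rightarrow> real) \<Rightarrow> (spin \<Rightarrow> real) \<Rightarrow> (spin \<times> spin \<Rightarrow> real) \<Rightarrow> bool" where
  "is_coupling N \<mu> \<nu> q \<longleftrightarrow>
     (\<forall>x y. q (x, y) \<ge> 0) \<and>
     (\<forall>x\<in>Omega N. (\<Sum>y\<in>Omega N. q (x, y)) = \<mu> x) \<and>
     (\<forall>y\<in>Omega N. (\<Sum>x\<in>Omega N. q (x, y)) = \<nu> y)"

definition W1 :: "nat \<Rightarrow> (spin \<Rightarrow> real) \<Rightarrow> (spin \<Rightarrow> real) \<Rightarrow> real" where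
  "W1 N \<mu> \<nu> = Inf {(\<Sum>z\<in>Omega N \<times> Omega N. q z * ham N (fst z) (snd z)) | q. is_coupling N \<mu> \<nu> q}"

definition single_site_chain :: "nat \<Rightarrow> (spin \<Rightarrow> real) \<Rightarrow> (spin \<Rightarrow> spin \<Rightarrow> real) \<Rightarrow> bool" where
  "single_site_chain N \<pi> P \<longleftrightarrow>
     (\<forall>\<sigma>\<in>Omega N. \<forall>\<tau>\<in>Omega N. P \<sigma> \<tau> \<ge> 0) \<and>
     (\<forall>\<sigma>\<in>Omega N. (\<Sum>\<tau>\<in>Omega N. P \<sigma> \<tau>) = 1) \<and>
     (\<forall>\<tau>\<in>Omega N. (\<Sum>\<sigma>\<in>Omega N. \<pi> \<sigma> * P \<sigma> \<tau>) = \<pi> \<tau>) \<and>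
     (\<forall>\<sigma>\<in>Omega N. \<forall>\<tau>\<in>Omega N. P \<sigma> \<tau> \<noteq> 0 \<longrightarrow> ham N \<sigma> \<tau> \<le> 1)"

definition contracting :: "nat \<Rightarrow> (nat \<Rightarrow> nat \<Rightarrow> real) \<Rightarrow> real \<Rightarrow> bool" where
  "contracting N J \<theta> \<longleftrightarrow> \<theta> < 1 \<and>
     (\<exists>P. single_site_chain N (ising N J) P \<and>
        (\<forall>\<sigma>\<in>Omega N. \<forall>\<sigma>'\<in>Omega N. ham N \<sigma> \<sigma>' = 1 \<longrightarrow> W1 N (P \<sigma>) (P \<sigma>') \<le> \<theta>))"

definition tuples :: "nat \<Rightarrow> nat \<Rightarrow> nat list set" where
  "tuples N p = {is. length is = p \<and> set is \<subseteq> {..<N}}"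

definition tensor_poly :: "nat \<Rightarrow> nat \<Rightarrow> (nat list \<Rightarrow> real) \<Rightarrow> spin \<Rightarrow> real" where
  "tensor_poly N p b \<sigma> = (\<Sum>is\<in>tuples N p. b is * (\<Prod>k<p. \<sigma> (is ! k)))"

definition tensor_sup :: "nat \<Rightarrow> nat \<Rightarrow> (nat list \<Rightarrow> real) \<Rightarrow> real" where
  "tensor_sup N p b = Max ((\<lambda>is. \<bar>b is\<bar>) ` tuples N p)"

end

theory Submission
  imports Defs
begin

definition mon :: "nat list \<Rightarrow> spin \<Rightarrow> real" where
  "mon xs \<sigma> = prod_list (map \<sigma> xs)"

lemma mon_Nil[simp]: "mon [] \<sigma> = 1" by (simp add: mon_def)
lemma mon_append: "mon (xs @ ys) \<sigma> = mon xs \<sigma> * mon ys \<sigma>" by (simp add: mon_def)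

lemma mon_nth: "(\<Prod>k<length xs. \<sigma> (xs ! k)) = mon xs \<sigma>"
  unfolding mon_def
proof (induction xs)
  case Nil then show ?case by simp
next
  case (Cons a xs)
  have "(\<Prod>k<length (a#xs). \<sigma> ((a#xs) ! k)) = \<sigma> a * (\<Prod>k<length xs. \<sigma> (xs ! k))"
    by (simp only: length_Cons prod.lessThan_Suc_shift nth_Cons_0 nth_Cons_Suc)
  then show ?case using Cons by simp
qed

lemma Omega_sub: "Omega N \<subseteq> (\<lambda>xs i. if i < N then xs ! i else 0) ` {xs. set xs \<subseteq> {1,-1} \<and> length xs = N}"
proof
  fix \<sigma> assume s: "\<sigma> \<in> Omega N"
  have "\<sigma> = (\<lambda>i. if i < N then map \<sigma> [0..<N] ! i else 0)"
    using s by (auto simp: Omega_def)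
  moreover have "set (map \<sigma> [0..<N]) \<subseteq> {1,-1}" using s by (auto simp: Omega_def)
  ultimately show "\<sigma> \<in> (\<lambda>xs i. if i < N then xs ! i else 0) ` {xs. set xs \<subseteq> {1,-1} \<and> length xs = N}"
    by (intro image_eqI[where x="map \<sigma> [0..<N]"]) auto
qed

lemma finite_Omega[simp]: "finite (Omega N)"
  by (rule finite_subset[OF Omega_sub]) (auto intro!: finite_lists_length_eq)

definition one :: "nat \<Rightarrow> spin" where "one N = (\<lambda>i. if i < N then 1 else 0)"

lemma one_Omega: "one N \<in> Omega N" by (auto simp: one_def Omega_def)

lemma Omega_ne[simp]: "Omega N \<noteq> {}" using one_Omega by blast

lemma Omega_abs: "\<sigma> \<in> Omega N \<Longrightarrow> \<bar>\<sigma> i\<bar> \<le> 1"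
  by (cases "i < N") (auto simp: Omega_def)

lemma Omega_sq: "\<sigma> \<in> Omega N \<Longrightarrow> i < N \<Longrightarrow> \<sigma> i * \<sigma> i = 1"
  by (auto simp: Omega_def)

lemma mon_abs: "\<sigma> \<in> Omega N \<Longrightarrow> \<bar>mon xs \<sigma>\<bar> \<le> 1"
  unfolding mon_def
proof (induction xs)
  case (Cons a xs)
  then show ?case using Omega_abs[OF Cons.prems, of a]
    by (simp add: abs_mult mult_le_one)
qed simp

lemma weight_pos: "ising_weight N J \<sigma> > 0" by (simp add: ising_weight_def)

lemma Z_pos: "(\<Sum>\<tau>\<in>Omega N. ising_weight N J \<tau>) > 0"
  by (rule sum_pos) (auto simp: weight_pos)

lemma ising_pos: "ising N J \<sigma> > 0"
  using Z_pos weight_pos by (simp add: ising_def)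

lemma ising_sum: "(\<Sum>\<sigma>\<in>Omega N. ising N J \<sigma>) = 1"
  using Z_pos[of N J] by (simp add: ising_def sum_divide_distrib[symmetric])

lemma prod_list_map_eq_prod_count:
  "prod_list (map (f::nat \<Rightarrow> real) xs) = (\<Prod>x\<in>set xs. f x ^ count_list xs x)"
proof(induction xs)
  case (Cons x xs)
  show ?case (is "?l = ?r")
  proof cases
    assume "x \<in> set xs"
    have "?l = f x * (\<Prod>x\<in>set xs. f x ^ count_list xs x)" by (simp add: Cons.IH)
    also have "set xs = insert x (set xs - {x})" using \<open>x \<in> set xs\<close>by blast
    also have "f x * (\<Prod>x\<in>insert x (set xs - {x}). f x ^ count_list xs x) = ?r"
      by (simp add: prod.insert_remove)
    finally show ?thesis .
  next
    assume "x \<notin> set xs"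
    hence "\<And>xa. xa \<in> set xs \<Longrightarrow> x \<noteq> xa" by blast
    thus ?thesis by (simp add: Cons.IH \<open>x \<notin> set xs\<close>)
  qed
qed simp

definition flip :: "nat \<Rightarrow> spin \<Rightarrow> spin" where "flip i \<sigma> = \<sigma>(i := - \<sigma> i)"

lemma flip_Omega: "i < N \<Longrightarrow> \<sigma> \<in> Omega N \<Longrightarrow> flip i \<sigma> \<in> Omega N"
  by (auto simp: flip_def Omega_def)

lemma flip_flip[simp]: "flip i (flip i \<sigma>) = \<sigma>"
  by (auto simp: flip_def)

lemma mon_flip: "mon xs (flip i \<sigma>) = (-1) ^ count_list xs i * mon xs \<sigma>"
  unfolding mon_def by (induction xs) (simp_all add: flip_def)

lemma mon_sum_nonneg: "(\<Sum>\<sigma>\<in>Omega N. mon xs \<sigma>) \<ge> 0"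
proof (cases "\<exists>i<N. odd (count_list xs i)")
  case True
  then obtain i where i: "i < N" "odd (count_list xs i)" by blast
  have "(\<Sum>\<sigma>\<in>Omega N. mon xs \<sigma>) = (\<Sum>\<sigma>\<in>Omega N. mon xs (flip i \<sigma>))"
    proof (rule sum.reindex_bij_witness[where i="flip i" and j="flip i"])
    fix a assume "a \<in> Omega N"
    then show "flip i a \<in> Omega N" by (rule flip_Omega[OF i(1)])
  next
    fix a assume "a \<in> Omega N"
    then show "flip i a \<in> Omega N" by (rule flip_Omega[OF i(1)])
  qed simp_all
  also have "\<dots> = - (\<Sum>\<sigma>\<in>Omega N. mon xs \<sigma>)"
    using i by (simp add: mon_flip sum_negf)
  finally show ?thesis by simp
next
  case False
  have "mon xs \<sigma> \<ge> 0" if s: "\<sigma> \<in> Omega N" for \<sigma>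
    unfolding mon_def prod_list_map_eq_prod_count
  proof (rule prod_nonneg)
    fix x assume "x \<in> set xs"
    show "0 \<le> \<sigma> x ^ count_list xs x"
    proof (cases "x < N")
      case True
      then have "even (count_list xs x)" using False by blast
      then show ?thesis by (simp add: zero_le_even_power)
    next
      case False
      then have "\<sigma> x = 0" using s by (simp add: Omega_def)
      then show ?thesis by simp
    qed
  qed
  then show ?thesis by (simp add: sum_nonneg)
qed


inductive pp :: "(spin \<Rightarrow> real) \<Rightarrow> bool" where
  pp_base: "c \<ge> 0 \<Longrightarrow> pp (\<lambda>\<sigma>. c * mon xs \<sigma>)"
| pp_add: "pp f \<Longrightarrow> pp g \<Longrightarrow> pp (\<lambda>\<sigma>. f \<sigma> + g \<sigma>)"

lemma pp_mult_base: "pp g \<Longrightarrow> c \<ge> 0 \<Longrightarrow> pp (\<lambda>\<sigma>. c * mon xs \<sigma> * g \<sigma>)"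
proof (induction g rule: pp.induct)
  case (pp_base d ys)
  have "(\<lambda>\<sigma>. c * mon xs \<sigma> * (d * mon ys \<sigma>)) = (\<lambda>\<sigma>. (c*d) * mon (xs@ys) \<sigma>)"
    by (simp add: fun_eq_iff mon_append)
  then show ?case using pp_base by (simp add: pp.pp_base)
next
  case (pp_add f g)
  have "(\<lambda>\<sigma>. c * mon xs \<sigma> * (f \<sigma> + g \<sigma>)) = (\<lambda>\<sigma>. c * mon xs \<sigma> * f \<sigma> + c * mon xs \<sigma> * g \<sigma>)"
    by (simp add: fun_eq_iff algebra_simps)
  then show ?case using pp_add by (simp add: pp.pp_add)
qed

lemma pp_mult: "pp f \<Longrightarrow> pp g \<Longrightarrow> pp (\<lambda>\<sigma>. f \<sigma> * g \<sigma>)"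
proof (induction f rule: pp.induct)
  case (pp_base c xs)
  then show ?case using pp_mult_base by blast
next
  case (pp_add f1 f2)
  have "(\<lambda>\<sigma>. (f1 \<sigma> + f2 \<sigma>) * g \<sigma>) = (\<lambda>\<sigma>. f1 \<sigma> * g \<sigma> + f2 \<sigma> * g \<sigma>)"
    by (simp add: fun_eq_iff algebra_simps)
  then show ?case using pp_add by (simp add: pp.pp_add)
qed

lemma pp_one: "pp (\<lambda>\<sigma>. 1)"
  using pp_base[of 1 "[]"] by simp

lemma pp_prod: "finite A \<Longrightarrow> (\<And>x. x \<in> A \<Longrightarrow> pp (g x)) \<Longrightarrow> pp (\<lambda>\<sigma>. \<Prod>x\<in>A. g x \<sigma>)"
proof (induction A rule: finite_induct)
  case empty then show ?case by (simp add: pp_one)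
next
  case (insert a A)
  have "pp (\<lambda>\<sigma>. g a \<sigma> * (\<Prod>x\<in>A. g x \<sigma>))"
    using insert by (intro pp_mult) auto
  then show ?case using insert by simp
qed

lemma pp_sum: "pp f \<Longrightarrow> (\<Sum>\<sigma>\<in>Omega N. f \<sigma>) \<ge> 0"
proof (induction f rule: pp.induct)
  case (pp_base c xs)
  then show ?case by (simp add: sum_distrib_left[symmetric] mon_sum_nonneg)
next
  case (pp_add f g)
  then show ?case by (simp add: sum.distrib)
qed

definition ca :: "real \<Rightarrow> real" where "ca k = (exp k + exp (-k)) / 2"
definition sa :: "real \<Rightarrow> real" where "sa k = (exp k - exp (-k)) / 2"

lemma exp_pm: "s = 1 \<or> s = -1 \<Longrightarrow> exp (k * s) = ca k + sa k * s"
  by (auto simp: ca_def sa_def field_simps)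

lemma sa_nonneg: "k \<ge> 0 \<Longrightarrow> sa k \<ge> 0"
  by (simp add: sa_def)

lemma ca_nonneg: "ca k \<ge> 0"
  by (simp add: ca_def add_nonneg_nonneg)

lemma weight_prod:
  assumes "\<sigma> \<in> Omega N"
  shows "ising_weight N K \<sigma> = (\<Prod>i<N. \<Prod>j<N. ca (K i j) + sa (K i j) * mon [i,j] \<sigma>)"
proof -
  have "ising_weight N K \<sigma> = (\<Prod>i<N. \<Prod>j<N. exp (K i j * (\<sigma> i * \<sigma> j)))"
    by (simp add: ising_weight_def exp_sum mult.assoc)
  also have "\<dots> = (\<Prod>i<N. \<Prod>j<N. ca (K i j) + sa (K i j) * mon [i,j] \<sigma>)"
  proof (intro prod.cong refl)
    fix i j assume "i \<in> {..<N}" "j \<in> {..<N}"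
    then have "\<sigma> i = 1 \<or> \<sigma> i = -1" "\<sigma> j = 1 \<or> \<sigma> j = -1" using assms by (auto simp: Omega_def)
    then have "\<sigma> i * \<sigma> j = 1 \<or> \<sigma> i * \<sigma> j = -1" by auto
    then show "exp (K i j * (\<sigma> i * \<sigma> j)) = ca (K i j) + sa (K i j) * mon [i,j] \<sigma>"
      by (simp add: exp_pm mon_def)
  qed
  finally show ?thesis .
qed

lemma griffiths:
  assumes "\<And>i j. K i j \<ge> 0"
  shows "(\<Sum>\<sigma>\<in>Omega N. mon xs \<sigma> * ising_weight N K \<sigma>) \<ge> 0"
proof -
  have "(\<Sum>\<sigma>\<in>Omega N. mon xs \<sigma> * ising_weight N K \<sigma>) =
        (\<Sum>\<sigma>\<in>Omega N. mon xs \<sigma> * (\<Prod>i<N. \<Prod>j<N. ca (K i j) + sa (K i j) * mon [i,j] \<sigma>))"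
    by (intro sum.cong refl) (simp add: weight_prod)
  also have "\<dots> \<ge> 0"
  proof (rule pp_sum, rule pp_mult)
    show "pp (mon xs)" using pp_base[of 1 xs] by simp
    show "pp (\<lambda>\<sigma>. \<Prod>i<N. \<Prod>j<N. ca (K i j) + sa (K i j) * mon [i,j] \<sigma>)"
    proof (intro pp_prod finite_lessThan)
      fix i j
      have "pp (\<lambda>\<sigma>. ca (K i j) * mon [] \<sigma> + sa (K i j) * mon [i,j] \<sigma>)"
        by (intro pp_add pp_base ca_nonneg sa_nonneg assms)
      then show "pp (\<lambda>\<sigma>. ca (K i j) + sa (K i j) * mon [i,j] \<sigma>)" by simp
    qed
  qed
  finally show ?thesis .
qed


definition mul :: "spin \<Rightarrow> spin \<Rightarrow> spin" where "mul \<sigma> t = (\<lambda>i. \<sigma> i * t i)"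

lemma mul_Omega: "\<sigma> \<in> Omega N \<Longrightarrow> t \<in> Omega N \<Longrightarrow> mul \<sigma> t \<in> Omega N"
proof -
  assume s: "\<sigma> \<in> Omega N" and t: "t \<in> Omega N"
  have "\<sigma> i * t i = 1 \<or> \<sigma> i * t i = -1" if "i < N" for i
  proof -
    have "\<sigma> i = 1 \<or> \<sigma> i = -1" "t i = 1 \<or> t i = -1" using s t that by (auto simp: Omega_def)
    then show ?thesis by auto
  qed
  then show ?thesis using s t by (auto simp: mul_def Omega_def)
qed

lemma mul_mul: "\<sigma> \<in> Omega N \<Longrightarrow> t \<in> Omega N \<Longrightarrow> mul \<sigma> (mul \<sigma> t) = t"
proof
  fix i assume s: "\<sigma> \<in> Omega N" and t: "t \<in> Omega N"
  show "mul \<sigma> (mul \<sigma> t) i = t i"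
  proof (cases "i < N")
    case True then show ?thesis using Omega_sq[OF s True] by (simp add: mul_def mult.assoc[symmetric])
  next
    case False then show ?thesis using t by (simp add: mul_def Omega_def)
  qed
qed

lemma mon_mul: "mon xs (mul \<sigma> t) = mon xs \<sigma> * mon xs t"
  unfolding mon_def by (induction xs) (simp_all add: mul_def)

lemma weight_mul:
  "ising_weight N J1 \<sigma> * ising_weight N J2 (mul \<sigma> t) =
   ising_weight N (\<lambda>i j. J1 i j + J2 i j * t i * t j) \<sigma>"
proof -
  have "(\<Sum>i<N. \<Sum>j<N. J1 i j * \<sigma> i * \<sigma> j) + (\<Sum>i<N. \<Sum>j<N. J2 i j * mul \<sigma> t i * mul \<sigma> t j)
      = (\<Sum>i<N. \<Sum>j<N. (J1 i j + J2 i j * t i * t j) * \<sigma> i * \<sigma> j)"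
    by (simp add: sum.distrib[symmetric] mul_def algebra_simps)
  then show ?thesis by (simp add: ising_weight_def exp_add[symmetric])
qed

lemma ginibre_D:
  assumes "\<bar>s\<bar> \<le> 1"
  shows "(\<Sum>\<sigma>\<in>Omega N. \<Sum>\<tau>\<in>Omega N. (mon xs \<sigma> - s * mon xs \<tau>) *
            (ising_weight N (\<lambda>i j. \<bar>J i j\<bar>) \<sigma> * ising_weight N J \<tau>)) \<ge> 0"
proof -
  let ?w1 = "ising_weight N (\<lambda>i j. \<bar>J i j\<bar>)" and ?w2 = "ising_weight N J"
  let ?K = "\<lambda>t i j. \<bar>J i j\<bar> + J i j * t i * t j"
  have "(\<Sum>\<sigma>\<in>Omega N. \<Sum>\<tau>\<in>Omega N. (mon xs \<sigma> - s * mon xs \<tau>) * (?w1 \<sigma> * ?w2 \<tau>)) =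
        (\<Sum>\<sigma>\<in>Omega N. \<Sum>t\<in>Omega N. (1 - s * mon xs t) * (mon xs \<sigma> * ising_weight N (?K t) \<sigma>))"
  proof (rule sum.cong[OF refl])
    fix \<sigma> assume s: "\<sigma> \<in> Omega N"
    have "(\<Sum>\<tau>\<in>Omega N. (mon xs \<sigma> - s * mon xs \<tau>) * (?w1 \<sigma> * ?w2 \<tau>)) =
          (\<Sum>t\<in>Omega N. (mon xs \<sigma> - s * mon xs (mul \<sigma> t)) * (?w1 \<sigma> * ?w2 (mul \<sigma> t)))"
    proof (rule sum.reindex_bij_witness[where i="mul \<sigma>" and j="mul \<sigma>"])
      fix a assume "a \<in> Omega N"
      then show "mul \<sigma> (mul \<sigma> a) = a" "mul \<sigma> a \<in> Omega N" using s by (auto simp: mul_mul mul_Omega)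
    next
      fix a assume "a \<in> Omega N"
      then show "mul \<sigma> (mul \<sigma> a) = a" "mul \<sigma> a \<in> Omega N" using s by (auto simp: mul_mul mul_Omega)
    next
      fix a assume "a \<in> Omega N"
      then show "(mon xs \<sigma> - s * mon xs (mul \<sigma> (mul \<sigma> a))) * (?w1 \<sigma> * ?w2 (mul \<sigma> (mul \<sigma> a))) =
         (mon xs \<sigma> - s * mon xs a) * (?w1 \<sigma> * ?w2 a)" using s by (simp add: mul_mul)
    qed
    also have "\<dots> = (\<Sum>t\<in>Omega N. (1 - s * mon xs t) * (mon xs \<sigma> * ising_weight N (?K t) \<sigma>))"
      by (intro sum.cong refl) (simp only: weight_mul mon_mul, simp add: algebra_simps)
    finally show "(\<Sum>\<tau>\<in>Omega N. (mon xs \<sigma> - s * mon xs \<tau>) * (?w1 \<sigma> * ?w2 \<tau>)) =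
          (\<Sum>t\<in>Omega N. (1 - s * mon xs t) * (mon xs \<sigma> * ising_weight N (?K t) \<sigma>))" .
  qed
  also have "\<dots> = (\<Sum>t\<in>Omega N. (1 - s * mon xs t) * (\<Sum>\<sigma>\<in>Omega N. mon xs \<sigma> * ising_weight N (?K t) \<sigma>))"
    by (subst sum.swap) (simp add: sum_distrib_left)
  also have "\<dots> \<ge> 0"
  proof (rule sum_nonneg, rule mult_nonneg_nonneg)
    fix t assume t: "t \<in> Omega N"
    have "\<bar>s * mon xs t\<bar> \<le> 1" using mon_abs[OF t] assms by (simp add: abs_mult mult_le_one)
    then show "0 \<le> 1 - s * mon xs t" by simp
    show "0 \<le> (\<Sum>\<sigma>\<in>Omega N. mon xs \<sigma> * ising_weight N (?K t) \<sigma>)"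
    proof (rule griffiths)
      fix i j
      have "\<bar>t i * t j\<bar> \<le> 1" using Omega_abs[OF t, of i] Omega_abs[OF t, of j]
        by (simp add: abs_mult mult_le_one)
      then have "\<bar>J i j * t i * t j\<bar> \<le> \<bar>J i j\<bar>"
        by (simp add: abs_mult mult.assoc mult_left_le)
      then show "0 \<le> ?K t i j" by linarith
    qed
  qed
  finally show ?thesis .
qed

lemma ginibre_D_eq:
  fixes w1 w2 :: "spin \<Rightarrow> real"
  shows "(\<Sum>\<sigma>\<in>Omega N. \<Sum>\<tau>\<in>Omega N. (mon xs \<sigma> - s * mon xs \<tau>) * (w1 \<sigma> * w2 \<tau>))
        = (\<Sum>\<sigma>\<in>Omega N. mon xs \<sigma> * w1 \<sigma>) * (\<Sum>\<sigma>\<in>Omega N. w2 \<sigma>)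
          - s * ((\<Sum>\<sigma>\<in>Omega N. w1 \<sigma>) * (\<Sum>\<sigma>\<in>Omega N. mon xs \<sigma> * w2 \<sigma>))"
proof -
  define Z1 where "Z1 = (\<Sum>\<sigma>\<in>Omega N. w1 \<sigma>)"
  define Z2 where "Z2 = (\<Sum>\<sigma>\<in>Omega N. w2 \<sigma>)"
  define A1 where "A1 = (\<Sum>\<sigma>\<in>Omega N. mon xs \<sigma> * w1 \<sigma>)"
  define A2 where "A2 = (\<Sum>\<sigma>\<in>Omega N. mon xs \<sigma> * w2 \<sigma>)"
  have inner: "(\<Sum>\<tau>\<in>Omega N. (mon xs \<sigma> - s * mon xs \<tau>) * (w1 \<sigma> * w2 \<tau>))
       = (mon xs \<sigma> * w1 \<sigma>) * Z2 - (s * w1 \<sigma>) * A2" for \<sigma>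
  proof -
    have "(\<Sum>\<tau>\<in>Omega N. (mon xs \<sigma> - s * mon xs \<tau>) * (w1 \<sigma> * w2 \<tau>))
      = (\<Sum>\<tau>\<in>Omega N. (mon xs \<sigma> * w1 \<sigma>) * w2 \<tau> - (s * w1 \<sigma>) * (mon xs \<tau> * w2 \<tau>))"
      by (rule sum.cong[OF refl]) (simp add: algebra_simps)
    also have "\<dots> = (\<Sum>\<tau>\<in>Omega N. (mon xs \<sigma> * w1 \<sigma>) * w2 \<tau>) - (\<Sum>\<tau>\<in>Omega N. (s * w1 \<sigma>) * (mon xs \<tau> * w2 \<tau>))"
      by (rule sum_subtractf)
    also have "\<dots> = (mon xs \<sigma> * w1 \<sigma>) * Z2 - (s * w1 \<sigma>) * A2"
      unfolding Z2_def A2_def by (simp only: sum_distrib_left)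
    finally show ?thesis .
  qed
  have "(\<Sum>\<sigma>\<in>Omega N. \<Sum>\<tau>\<in>Omega N. (mon xs \<sigma> - s * mon xs \<tau>) * (w1 \<sigma> * w2 \<tau>))
     = (\<Sum>\<sigma>\<in>Omega N. (mon xs \<sigma> * w1 \<sigma>) * Z2 - (s * w1 \<sigma>) * A2)"
    by (simp only: inner)
  also have "\<dots> = (\<Sum>\<sigma>\<in>Omega N. (mon xs \<sigma> * w1 \<sigma>) * Z2) - (\<Sum>\<sigma>\<in>Omega N. (s * w1 \<sigma>) * A2)"
    by (rule sum_subtractf)
  also have "\<dots> = A1 * Z2 - (s * Z1) * A2"
    unfolding Z1_def A1_def by (simp only: sum_distrib_right sum_distrib_left)
  finally show ?thesis unfolding Z1_def Z2_def A1_def A2_def by simp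
qed

lemma ising_mon_eq:
  "(\<Sum>\<sigma>\<in>Omega N. ising N J \<sigma> * mon xs \<sigma>) =
   (\<Sum>\<sigma>\<in>Omega N. mon xs \<sigma> * ising_weight N J \<sigma>) / (\<Sum>\<sigma>\<in>Omega N. ising_weight N J \<sigma>)"
  unfolding ising_def sum_divide_distrib by (rule sum.cong[OF refl]) simp

lemma ginibre:
  "\<bar>\<Sum>\<sigma>\<in>Omega N. ising N J \<sigma> * mon xs \<sigma>\<bar> \<le> (\<Sum>\<sigma>\<in>Omega N. ising N (\<lambda>i j. \<bar>J i j\<bar>) \<sigma> * mon xs \<sigma>)"
proof -
  let ?w1 = "ising_weight N (\<lambda>i j. \<bar>J i j\<bar>)" and ?w2 = "ising_weight N J"
  define Z1 where "Z1 = (\<Sum>\<sigma>\<in>Omega N. ?w1 \<sigma>)"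
  define Z2 where "Z2 = (\<Sum>\<sigma>\<in>Omega N. ?w2 \<sigma>)"
  define A1 where "A1 = (\<Sum>\<sigma>\<in>Omega N. mon xs \<sigma> * ?w1 \<sigma>)"
  define A2 where "A2 = (\<Sum>\<sigma>\<in>Omega N. mon xs \<sigma> * ?w2 \<sigma>)"
  have Z1: "Z1 > 0" unfolding Z1_def by (rule Z_pos)
  have Z2: "Z2 > 0" unfolding Z2_def by (rule Z_pos)
  have a1: "\<bar>1::real\<bar> \<le> 1" by simp
  have a2: "\<bar>-1::real\<bar> \<le> 1" by simp
  have p: "0 \<le> A1 * Z2 - 1 * (Z1 * A2)"
    using ginibre_D[where s=1 and N=N and xs=xs and J=J, OF a1]
    unfolding ginibre_D_eq A1_def A2_def Z1_def Z2_def .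
  have m: "0 \<le> A1 * Z2 - (-1) * (Z1 * A2)"
    using ginibre_D[where s="-1" and N=N and xs=xs and J=J, OF a2]
    unfolding ginibre_D_eq A1_def A2_def Z1_def Z2_def .
  have p': "Z1 * A2 \<le> A1 * Z2" using p by linarith
  have m': "- (Z1 * A2) \<le> A1 * Z2" using m by linarith
  have "\<bar>Z1 * A2\<bar> \<le> A1 * Z2" by (rule abs_leI[OF p' m'])
  moreover have "\<bar>Z1 * A2\<bar> = Z1 * \<bar>A2\<bar>" using Z1 by (simp add: abs_mult)
  ultimately have le: "Z1 * \<bar>A2\<bar> \<le> A1 * Z2" by simp
  have ZZ: "Z1 * Z2 > 0" by (rule mult_pos_pos[OF Z1 Z2])
  have Z1n: "Z1 \<noteq> 0" and Z2n: "Z2 \<noteq> 0" using Z1 Z2 by auto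
  have "\<bar>A2\<bar> / Z2 = (Z1 * \<bar>A2\<bar>) / (Z1 * Z2)" by (rule mult_divide_mult_cancel_left[OF Z1n, symmetric])
  also have "\<dots> \<le> (A1 * Z2) / (Z1 * Z2)" by (rule divide_right_mono[OF le less_imp_le[OF ZZ]])
  also have "\<dots> = A1 / Z1" by (rule mult_divide_mult_cancel_right[OF Z2n])
  finally have "\<bar>A2\<bar> / Z2 \<le> A1 / Z1" .
  then have "\<bar>A2 / Z2\<bar> \<le> A1 / Z1" by (simp only: abs_div_pos[OF Z2])
  then show ?thesis unfolding ising_mon_eq A1_def A2_def Z1_def Z2_def .
qed

lemma tuples_Suc: "tuples N (Suc p) = (\<lambda>(i,xs). i # xs) ` ({..<N} \<times> tuples N p)"
proof (rule set_eqI)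
  fix ys
  show "ys \<in> tuples N (Suc p) \<longleftrightarrow> ys \<in> (\<lambda>(i,xs). i # xs) ` ({..<N} \<times> tuples N p)"
    by (cases ys) (auto simp: tuples_def)
qed

lemma finite_tuples[simp]: "finite (tuples N p)"
proof -
  have "tuples N p = {xs. set xs \<subseteq> {..<N} \<and> length xs = p}" by (auto simp: tuples_def)
  then show ?thesis by (simp add: finite_lists_length_eq)
qed

lemma sum_tuples_mon: "(\<Sum>xs\<in>tuples N p. mon xs \<sigma>) = (\<Sum>i<N. \<sigma> i) ^ p"
proof (induction p)
  case 0
  have "tuples N 0 = {[]}" by (auto simp: tuples_def)
  then show ?case by simp
next
  case (Suc p)
  have inj: "inj_on (\<lambda>(i,xs). i # xs) ({..<N} \<times> tuples N p)" by (auto simp: inj_on_def)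
  have "(\<Sum>xs\<in>tuples N (Suc p). mon xs \<sigma>) = (\<Sum>z\<in>{..<N} \<times> tuples N p. mon (fst z # snd z) \<sigma>)"
    unfolding tuples_Suc by (subst sum.reindex[OF inj]) (simp add: case_prod_beta)
  also have "\<dots> = (\<Sum>i<N. \<Sum>xs\<in>tuples N p. \<sigma> i * mon xs \<sigma>)"
    unfolding sum.cartesian_product by (simp add: case_prod_beta mon_def)
  also have "\<dots> = (\<Sum>i<N. \<sigma> i) * (\<Sum>xs\<in>tuples N p. mon xs \<sigma>)"
    by (simp add: sum_product)
  finally show ?case using Suc by simp
qed

definition D :: "nat \<Rightarrow> spin \<Rightarrow> spin \<Rightarrow> nat set" where "D N x y = {i. i < N \<and> x i \<noteq> y i}"

lemma D_finite[simp]: "finite (D N x y)" by (rule finite_subset[of _ "{..<N}"]) (auto simp: D_def)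

lemma ham_D: "ham N x y = real (card (D N x y))" by (simp add: ham_def D_def)

lemma ham_le_N: "ham N x y \<le> real N"
proof -
  have "card (D N x y) \<le> card {..<N}" by (rule card_mono) (auto simp: D_def)
  then show ?thesis by (simp add: ham_D)
qed

lemma ham_self[simp]: "ham N x x = 0" by (simp add: ham_def)

lemma ham_nonneg: "ham N x y \<ge> 0" by (simp add: ham_def)

lemma D_empty_eq: "x \<in> Omega N \<Longrightarrow> y \<in> Omega N \<Longrightarrow> D N x y = {} \<Longrightarrow> x = y"
proof
  fix i assume x: "x \<in> Omega N" and y: "y \<in> Omega N" and e: "D N x y = {}"
  show "x i = y i"
  proof (cases "i < N")
    case True then show ?thesis using e by (auto simp: D_def)
  next
    case False then show ?thesis using x y by (simp add: Omega_def)
  qed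
qed

definition nlip :: "nat \<Rightarrow> (spin \<Rightarrow> real) \<Rightarrow> real \<Rightarrow> bool" where
  "nlip N f L \<longleftrightarrow> (\<forall>x\<in>Omega N. \<forall>y\<in>Omega N. ham N x y = 1 \<longrightarrow> \<bar>f x - f y\<bar> \<le> L)"

lemma nlip_full:
  assumes "nlip N f L"
  shows "x \<in> Omega N \<Longrightarrow> y \<in> Omega N \<Longrightarrow> \<bar>f x - f y\<bar> \<le> L * ham N x y"
proof (induction "card (D N x y)" arbitrary: x)
  case 0
  then have "D N x y = {}" by simp
  then have "x = y" using D_empty_eq 0 by blast
  then show ?case by simp
next
  case (Suc m x)
  then have "D N x y \<noteq> {}" by auto
  then obtain i where i: "i \<in> D N x y" by blast
  then have iN: "i < N" and ne: "x i \<noteq> y i" by (auto simp: D_def)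
  define x' where "x' = x(i := y i)"
  have x': "x' \<in> Omega N" using Suc.prems iN by (auto simp: x'_def Omega_def)
  have "D N x x' = {i}" using ne iN by (auto simp: D_def x'_def)
  then have h1: "ham N x x' = 1" by (simp add: ham_D)
  have "D N x' y = D N x y - {i}" by (auto simp: D_def x'_def)
  then have c: "card (D N x' y) = m" using Suc.hyps(2) i by simp
  have h2: "\<bar>f x' - f y\<bar> \<le> L * ham N x' y" by (rule Suc.hyps(1)[OF c[symmetric] x' Suc.prems(2)])
  have h3: "\<bar>f x - f x'\<bar> \<le> L" using assms h1 Suc.prems x' by (auto simp: nlip_def)
  have "ham N x y = 1 + ham N x' y" using c Suc.hyps(2) by (simp add: ham_D)
  then have e: "L * ham N x y = L + L * ham N x' y" by (simp add: distrib_left)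
  have "\<bar>f x - f y\<bar> \<le> \<bar>f x - f x'\<bar> + \<bar>f x' - f y\<bar>"
    using abs_triangle_ineq[of "f x - f x'" "f x' - f y"] by simp
  then show ?case using h2 h3 e by linarith
qed


definition Pop :: "nat \<Rightarrow> (spin \<Rightarrow> spin \<Rightarrow> real) \<Rightarrow> (spin \<Rightarrow> real) \<Rightarrow> spin \<Rightarrow> real" where
  "Pop N P f \<sigma> = (\<Sum>\<tau>\<in>Omega N. P \<sigma> \<tau> * f \<tau>)"

definition EE :: "nat \<Rightarrow> (spin \<Rightarrow> real) \<Rightarrow> (spin \<Rightarrow> real) \<Rightarrow> real" where
  "EE N mu f = (\<Sum>\<sigma>\<in>Omega N. mu \<sigma> * f \<sigma>)"

lemma coupling_set_ne:
  assumes chain: "single_site_chain N mu P" and s: "\<sigma> \<in> Omega N" and s': "\<sigma>' \<in> Omega N"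
  shows "\<exists>q. is_coupling N (P \<sigma>) (P \<sigma>') q"
proof -
  define q where "q = (\<lambda>z::spin\<times>spin. if fst z \<in> Omega N \<and> snd z \<in> Omega N then P \<sigma> (fst z) * P \<sigma>' (snd z) else 0)"
  have nn: "\<forall>x\<in>Omega N. \<forall>y\<in>Omega N. P x y \<ge> 0" and rs: "\<forall>x\<in>Omega N. (\<Sum>y\<in>Omega N. P x y) = 1"
    using chain by (auto simp: single_site_chain_def)
  have "q (x, y) \<ge> 0" for x y using nn s s' by (simp add: q_def)
  moreover have "(\<Sum>y\<in>Omega N. q (x, y)) = P \<sigma> x" if x: "x \<in> Omega N" for x
  proof -
    have "(\<Sum>y\<in>Omega N. q (x, y)) = (\<Sum>y\<in>Omega N. P \<sigma> x * P \<sigma>' y)"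
      by (rule sum.cong[OF refl]) (simp add: q_def x)
    also have "\<dots> = P \<sigma> x * (\<Sum>y\<in>Omega N. P \<sigma>' y)" by (simp only: sum_distrib_left)
    also have "\<dots> = P \<sigma> x" using rs s' by simp
    finally show ?thesis .
  qed
  moreover have "(\<Sum>x\<in>Omega N. q (x, y)) = P \<sigma>' y" if y: "y \<in> Omega N" for y
  proof -
    have "(\<Sum>x\<in>Omega N. q (x, y)) = (\<Sum>x\<in>Omega N. P \<sigma> x * P \<sigma>' y)"
      by (rule sum.cong[OF refl]) (simp add: q_def y)
    also have "\<dots> = (\<Sum>x\<in>Omega N. P \<sigma> x) * P \<sigma>' y" by (simp only: sum_distrib_right)
    also have "\<dots> = P \<sigma>' y" using rs s by simp
    finally show ?thesis .
  qed
  ultimately have "is_coupling N (P \<sigma>) (P \<sigma>') q" by (simp add: is_coupling_def)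
  then show ?thesis by blast
qed

lemma coupling_bound:
  assumes q: "is_coupling N (P \<sigma>) (P \<sigma>') q" and f: "nlip N f L" and L: "L \<ge> 0"
  shows "\<bar>Pop N P f \<sigma> - Pop N P f \<sigma>'\<bar> \<le> L * (\<Sum>z\<in>Omega N \<times> Omega N. q z * ham N (fst z) (snd z))"
proof -
  have q0: "\<And>x y. q (x, y) \<ge> 0" and m1: "\<And>x. x \<in> Omega N \<Longrightarrow> (\<Sum>y\<in>Omega N. q (x, y)) = P \<sigma> x"
    and m2: "\<And>y. y \<in> Omega N \<Longrightarrow> (\<Sum>x\<in>Omega N. q (x, y)) = P \<sigma>' y"
    using q by (auto simp: is_coupling_def)
  have e1: "Pop N P f \<sigma> = (\<Sum>x\<in>Omega N. \<Sum>y\<in>Omega N. q (x, y) * f x)"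
    unfolding Pop_def by (rule sum.cong[OF refl]) (simp add: m1[symmetric] sum_distrib_right)
  have e2: "Pop N P f \<sigma>' = (\<Sum>x\<in>Omega N. \<Sum>y\<in>Omega N. q (x, y) * f y)"
  proof -
    have "Pop N P f \<sigma>' = (\<Sum>y\<in>Omega N. \<Sum>x\<in>Omega N. q (x, y) * f y)"
      unfolding Pop_def by (rule sum.cong[OF refl]) (simp add: m2[symmetric] sum_distrib_right)
    also have "\<dots> = (\<Sum>x\<in>Omega N. \<Sum>y\<in>Omega N. q (x, y) * f y)" by (rule sum.swap)
    finally show ?thesis .
  qed
  have "Pop N P f \<sigma> - Pop N P f \<sigma>' = (\<Sum>x\<in>Omega N. \<Sum>y\<in>Omega N. q (x, y) * (f x - f y))"
    unfolding e1 e2 by (simp only: sum_subtractf[symmetric] right_diff_distrib)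
  then have "\<bar>Pop N P f \<sigma> - Pop N P f \<sigma>'\<bar> \<le> (\<Sum>x\<in>Omega N. \<bar>\<Sum>y\<in>Omega N. q (x, y) * (f x - f y)\<bar>)"
    using sum_abs[of "\<lambda>x. \<Sum>y\<in>Omega N. q (x, y) * (f x - f y)" "Omega N"] by simp
  also have "\<dots> \<le> (\<Sum>x\<in>Omega N. \<Sum>y\<in>Omega N. \<bar>q (x, y) * (f x - f y)\<bar>)"
    by (rule sum_mono) (rule sum_abs)
  also have "\<dots> \<le> (\<Sum>x\<in>Omega N. \<Sum>y\<in>Omega N. L * (q (x, y) * ham N x y))"
  proof (intro sum_mono)
    fix x y assume x: "x \<in> Omega N" and y: "y \<in> Omega N"
    have "\<bar>f x - f y\<bar> \<le> L * ham N x y" by (rule nlip_full[OF f x y])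
    then have "q (x, y) * \<bar>f x - f y\<bar> \<le> q (x, y) * (L * ham N x y)"
      by (rule mult_left_mono[OF _ q0])
    moreover have "\<bar>q (x, y) * (f x - f y)\<bar> = q (x, y) * \<bar>f x - f y\<bar>"
      by (simp only: abs_mult abs_of_nonneg[OF q0])
    moreover have "q (x, y) * (L * ham N x y) = L * (q (x, y) * ham N x y)"
      by (simp only: mult.left_commute)
    ultimately show "\<bar>q (x, y) * (f x - f y)\<bar> \<le> L * (q (x, y) * ham N x y)" by simp
  qed
  also have "\<dots> = L * (\<Sum>x\<in>Omega N. \<Sum>y\<in>Omega N. q (x, y) * ham N x y)"
    by (simp only: sum_distrib_left)
  also have "(\<Sum>x\<in>Omega N. \<Sum>y\<in>Omega N. q (x, y) * ham N x y) = (\<Sum>z\<in>Omega N \<times> Omega N. q z * ham N (fst z) (snd z))"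
    unfolding sum.cartesian_product by (rule sum.cong[OF refl]) (simp add: case_prod_beta)
  finally show ?thesis .
qed

lemma W1_nonneg:
  assumes chain: "single_site_chain N mu P" and s: "\<sigma> \<in> Omega N" and s': "\<sigma>' \<in> Omega N"
  shows "W1 N (P \<sigma>) (P \<sigma>') \<ge> 0"
  unfolding W1_def
proof (rule cInf_greatest)
  show "{\<Sum>z\<in>Omega N \<times> Omega N. q z * ham N (fst z) (snd z) |q. is_coupling N (P \<sigma>) (P \<sigma>') q} \<noteq> {}"
    using coupling_set_ne[OF chain s s'] by blast
  fix c assume "c \<in> {\<Sum>z\<in>Omega N \<times> Omega N. q z * ham N (fst z) (snd z) |q. is_coupling N (P \<sigma>) (P \<sigma>') q}"
  then obtain q where q: "is_coupling N (P \<sigma>) (P \<sigma>') q" and c: "c = (\<Sum>z\<in>Omega N \<times> Omega N. q z * ham N (fst z) (snd z))"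
    by blast
  have "\<forall>z. q z \<ge> 0" using q by (auto simp: is_coupling_def)
  then show "0 \<le> c" unfolding c by (intro sum_nonneg mult_nonneg_nonneg) (auto simp: ham_nonneg)
qed

lemma contract_step:
  assumes chain: "single_site_chain N mu P"
    and contr: "\<forall>\<sigma>\<in>Omega N. \<forall>\<sigma>'\<in>Omega N. ham N \<sigma> \<sigma>' = 1 \<longrightarrow> W1 N (P \<sigma>) (P \<sigma>') \<le> \<theta>"
    and f: "nlip N f L" and L: "L \<ge> 0"
  shows "nlip N (Pop N P f) (\<theta> * L)"
  unfolding nlip_def
proof (intro ballI impI)
  fix \<sigma> \<sigma>' assume s: "\<sigma> \<in> Omega N" and s': "\<sigma>' \<in> Omega N" and h: "ham N \<sigma> \<sigma>' = 1"
  let ?C = "{\<Sum>z\<in>Omega N \<times> Omega N. q z * ham N (fst z) (snd z) |q. is_coupling N (P \<sigma>) (P \<sigma>') q}"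
  have W: "W1 N (P \<sigma>) (P \<sigma>') \<le> \<theta>" using contr s s' h by blast
  have W0: "W1 N (P \<sigma>) (P \<sigma>') \<ge> 0" by (rule W1_nonneg[OF chain s s'])
  have ne: "?C \<noteq> {}" using coupling_set_ne[OF chain s s'] by blast
  let ?d = "\<bar>Pop N P f \<sigma> - Pop N P f \<sigma>'\<bar>"
  have all: "\<forall>c\<in>?C. ?d \<le> L * c" using coupling_bound[OF _ f L] by blast
  show "?d \<le> \<theta> * L"
  proof (cases "L = 0")
    case True
    then have "?d \<le> 0" using all ne by fastforce
    then show ?thesis using True by simp
  next
    case False
    then have Lp: "L > 0" using L by simp
    have "?d / L \<le> Inf ?C"
    proof (rule cInf_greatest[OF ne])
      fix c assume "c \<in> ?C"
      then have "?d \<le> L * c" using all by blast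
      then show "?d / L \<le> c" using Lp by (simp add: divide_le_eq mult.commute)
    qed
    then have "?d / L \<le> \<theta>" using W unfolding W1_def by linarith
    then show ?thesis using Lp by (simp add: divide_le_eq mult.commute)
  qed
qed


lemma EE_Pop:
  assumes chain: "single_site_chain N mu P"
  shows "EE N mu (Pop N P f) = EE N mu f"
proof -
  have st: "\<And>\<tau>. \<tau> \<in> Omega N \<Longrightarrow> (\<Sum>\<sigma>\<in>Omega N. mu \<sigma> * P \<sigma> \<tau>) = mu \<tau>"
    using chain by (auto simp: single_site_chain_def)
  have "EE N mu (Pop N P f) = (\<Sum>\<sigma>\<in>Omega N. \<Sum>\<tau>\<in>Omega N. mu \<sigma> * (P \<sigma> \<tau> * f \<tau>))"
    unfolding EE_def Pop_def by (simp only: sum_distrib_left)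
  also have "\<dots> = (\<Sum>\<tau>\<in>Omega N. \<Sum>\<sigma>\<in>Omega N. mu \<sigma> * (P \<sigma> \<tau> * f \<tau>))"
    by (rule sum.swap)
  also have "\<dots> = (\<Sum>\<tau>\<in>Omega N. (\<Sum>\<sigma>\<in>Omega N. mu \<sigma> * P \<sigma> \<tau>) * f \<tau>)"
    by (simp only: sum_distrib_right mult.assoc)
  also have "\<dots> = EE N mu f"
    unfolding EE_def by (rule sum.cong[OF refl]) (simp add: st)
  finally show ?thesis .
qed

lemma funpow_Pop: "(Pop N P ^^ Suc t) f = Pop N P ((Pop N P ^^ t) f)"
  by simp

lemma EE_iter:
  assumes chain: "single_site_chain N mu P"
  shows "EE N mu ((Pop N P ^^ t) f) = EE N mu f"
proof (induction t)
  case (Suc t)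
  then show ?case by (simp only: funpow_Pop EE_Pop[OF chain])
qed simp

lemma nlip_iter:
  assumes chain: "single_site_chain N mu P"
    and contr: "\<forall>\<sigma>\<in>Omega N. \<forall>\<sigma>'\<in>Omega N. ham N \<sigma> \<sigma>' = 1 \<longrightarrow> W1 N (P \<sigma>) (P \<sigma>') \<le> \<theta>"
    and th: "\<theta> \<ge> 0" and f: "nlip N f L" and L: "L \<ge> 0"
  shows "nlip N ((Pop N P ^^ t) f) (\<theta> ^ t * L)"
proof (induction t)
  case 0
  then show ?case using f by simp
next
  case (Suc t)
  have "nlip N (Pop N P ((Pop N P ^^ t) f)) (\<theta> * (\<theta> ^ t * L))"
    by (rule contract_step[OF chain contr Suc]) (use th L in simp)
  then show ?case by (simp only: funpow_Pop power_Suc mult.assoc)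
qed

lemma exp_quad:
  fixes y :: real
  assumes "\<bar>y\<bar> \<le> 1"
  shows "exp y \<le> 1 + y + y^2"
proof (cases "y \<ge> 0")
  case True
  then show ?thesis using exp_bound[of y] assms by simp
next
  case False
  define x where "x = - y"
  have x0: "0 \<le> x" and x1: "x \<le> 1" using False assms by (auto simp: x_def)
  have lo: "1 + x + x^2 / 2 \<le> exp x" by (rule exp_lower_Taylor_quadratic[OF x0])
  have e: "1 - x + x^2 = (x - 1/2)^2 + 3/4" by (simp add: power2_eq_square algebra_simps)
  have pos: "0 < 1 - x + x^2" unfolding e by (simp add: add_nonneg_pos)
  have e2: "(1 + x + x^2 / 2) * (1 - x + x^2) = 1 + (x^2 + x^3 + x^4) / 2"
    by (simp add: field_simps power2_eq_square power3_eq_cube power4_eq_xxxx)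
  have "x^2 + x^3 + x^4 \<ge> 0" using x0 by simp
  then have prod: "1 \<le> (1 + x + x^2 / 2) * (1 - x + x^2)" unfolding e2 by simp
  have "1 \<le> exp x * (1 - x + x^2)"
    using prod mult_right_mono[OF lo less_imp_le[OF pos]] by linarith
  then have "1 / exp x \<le> 1 - x + x^2"
    by (simp add: divide_le_eq mult.commute)
  then show ?thesis by (simp add: x_def exp_minus inverse_eq_divide)
qed

lemma exp_step:
  assumes chain: "single_site_chain N mu P" and h: "nlip N h L" and L: "L \<ge> 0"
    and lam: "\<bar>lam\<bar> * (2 * L) \<le> 1" and s: "\<sigma> \<in> Omega N"
  shows "Pop N P (\<lambda>x. exp (lam * h x)) \<sigma> \<le> exp (4 * lam^2 * L^2) * exp (lam * Pop N P h \<sigma>)"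
proof -
  have Pnn: "\<And>\<tau>. \<tau> \<in> Omega N \<Longrightarrow> P \<sigma> \<tau> \<ge> 0" and rs: "(\<Sum>\<tau>\<in>Omega N. P \<sigma> \<tau>) = 1"
    and loc: "\<And>\<tau>. \<tau> \<in> Omega N \<Longrightarrow> P \<sigma> \<tau> \<noteq> 0 \<Longrightarrow> ham N \<sigma> \<tau> \<le> 1"
    using chain s by (auto simp: single_site_chain_def)
  define m where "m = Pop N P h \<sigma>"
  have hP: "\<bar>h \<tau> - h \<sigma>\<bar> \<le> L" if "\<tau> \<in> Omega N" "P \<sigma> \<tau> \<noteq> 0" for \<tau>
  proof -
    have "\<bar>h \<tau> - h \<sigma>\<bar> \<le> L * ham N \<tau> \<sigma>" by (rule nlip_full[OF h that(1) s])
    also have "ham N \<tau> \<sigma> = ham N \<sigma> \<tau>" unfolding ham_def by (metis)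
    also have "L * ham N \<sigma> \<tau> \<le> L * 1" by (rule mult_left_mono[OF loc[OF that] L])
    finally show ?thesis by simp
  qed
  have term1: "P \<sigma> \<tau> * \<bar>h \<tau> - h \<sigma>\<bar> \<le> P \<sigma> \<tau> * L" if "\<tau> \<in> Omega N" for \<tau>
    using hP[OF that] Pnn[OF that] by (cases "P \<sigma> \<tau> = 0") (auto intro: mult_left_mono)
  have "m - h \<sigma> = (\<Sum>\<tau>\<in>Omega N. P \<sigma> \<tau> * (h \<tau> - h \<sigma>))"
  proof -
    have "(\<Sum>\<tau>\<in>Omega N. P \<sigma> \<tau> * (h \<tau> - h \<sigma>)) = m - (\<Sum>\<tau>\<in>Omega N. P \<sigma> \<tau>) * h \<sigma>"
      unfolding m_def Pop_def by (simp only: right_diff_distrib sum_subtractf sum_distrib_right)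
    then show ?thesis using rs by simp
  qed
  then have "\<bar>m - h \<sigma>\<bar> \<le> (\<Sum>\<tau>\<in>Omega N. \<bar>P \<sigma> \<tau> * (h \<tau> - h \<sigma>)\<bar>)"
    using sum_abs[of "\<lambda>\<tau>. P \<sigma> \<tau> * (h \<tau> - h \<sigma>)" "Omega N"] by simp
  also have "\<dots> \<le> (\<Sum>\<tau>\<in>Omega N. P \<sigma> \<tau> * L)"
  proof (rule sum_mono)
    fix \<tau> assume t: "\<tau> \<in> Omega N"
    have "\<bar>P \<sigma> \<tau> * (h \<tau> - h \<sigma>)\<bar> = P \<sigma> \<tau> * \<bar>h \<tau> - h \<sigma>\<bar>" by (simp only: abs_mult abs_of_nonneg[OF Pnn[OF t]])
    then show "\<bar>P \<sigma> \<tau> * (h \<tau> - h \<sigma>)\<bar> \<le> P \<sigma> \<tau> * L" using term1[OF t] by simp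
  qed
  also have "\<dots> = (\<Sum>\<tau>\<in>Omega N. P \<sigma> \<tau>) * L" by (simp only: sum_distrib_right)
  also have "\<dots> = L" using rs by simp
  finally have hm: "\<bar>m - h \<sigma>\<bar> \<le> L" .
  have pt: "P \<sigma> \<tau> * exp (lam * h \<tau>) \<le> exp (lam * m) * (P \<sigma> \<tau> + lam * (P \<sigma> \<tau> * (h \<tau> - m)) + P \<sigma> \<tau> * (4 * lam^2 * L^2))"
    if t: "\<tau> \<in> Omega N" for \<tau>
  proof (cases "P \<sigma> \<tau> = 0")
    case True then show ?thesis by simp
  next
    case False
    have d: "\<bar>h \<tau> - m\<bar> \<le> 2 * L" using hP[OF t False] hm by linarith
    define y where "y = lam * (h \<tau> - m)"
    have ay: "\<bar>y\<bar> \<le> \<bar>lam\<bar> * (2 * L)" unfolding y_def abs_mult by (rule mult_left_mono[OF d abs_ge_zero])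
    then have y1: "\<bar>y\<bar> \<le> 1" using lam by linarith
    have y2: "y^2 \<le> 4 * lam^2 * L^2"
    proof -
      have "y^2 = \<bar>y\<bar>^2" by simp
      also have "\<dots> \<le> (\<bar>lam\<bar> * (2 * L))^2" by (rule power_mono[OF ay abs_ge_zero])
      also have "\<dots> = 4 * lam^2 * L^2" by (simp add: power_mult_distrib)
      finally show ?thesis .
    qed
    have "exp (lam * h \<tau>) = exp (lam * m) * exp y" unfolding y_def by (simp add: exp_add[symmetric] algebra_simps)
    also have "\<dots> \<le> exp (lam * m) * (1 + y + 4 * lam^2 * L^2)"
      using exp_quad[OF y1] y2 by (intro mult_left_mono) auto
    finally have "P \<sigma> \<tau> * exp (lam * h \<tau>) \<le> P \<sigma> \<tau> * (exp (lam * m) * (1 + y + 4 * lam^2 * L^2))"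
      by (rule mult_left_mono[OF _ Pnn[OF t]])
    then show ?thesis unfolding y_def by (simp add: algebra_simps)
  qed
  have "Pop N P (\<lambda>x. exp (lam * h x)) \<sigma> \<le> (\<Sum>\<tau>\<in>Omega N. exp (lam * m) * (P \<sigma> \<tau> + lam * (P \<sigma> \<tau> * (h \<tau> - m)) + P \<sigma> \<tau> * (4 * lam^2 * L^2)))"
    unfolding Pop_def by (rule sum_mono) (rule pt)
  also have "\<dots> = exp (lam * m) * ((\<Sum>\<tau>\<in>Omega N. P \<sigma> \<tau>) + lam * (\<Sum>\<tau>\<in>Omega N. P \<sigma> \<tau> * (h \<tau> - m)) + (\<Sum>\<tau>\<in>Omega N. P \<sigma> \<tau>) * (4 * lam^2 * L^2))"
    by (simp only: sum_distrib_left[symmetric] sum.distrib sum_distrib_right[symmetric])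
  also have "(\<Sum>\<tau>\<in>Omega N. P \<sigma> \<tau> * (h \<tau> - m)) = 0"
  proof -
    have "(\<Sum>\<tau>\<in>Omega N. P \<sigma> \<tau> * (h \<tau> - m)) = m - (\<Sum>\<tau>\<in>Omega N. P \<sigma> \<tau>) * m"
      unfolding m_def Pop_def by (simp only: right_diff_distrib sum_subtractf sum_distrib_right)
    then show ?thesis using rs by simp
  qed
  also have "exp (lam * m) * ((\<Sum>\<tau>\<in>Omega N. P \<sigma> \<tau>) + lam * 0 + (\<Sum>\<tau>\<in>Omega N. P \<sigma> \<tau>) * (4 * lam^2 * L^2))
       = exp (lam * m) * (1 + 4 * lam^2 * L^2)" using rs by simp
  also have "\<dots> \<le> exp (lam * m) * exp (4 * lam^2 * L^2)"
    by (rule mult_left_mono[OF exp_ge_add_one_self]) simp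
  finally show ?thesis unfolding m_def by (simp only: mult.commute)
qed


lemma exp_EE:
  assumes chain: "single_site_chain N mu P" and mu0: "\<forall>\<sigma>\<in>Omega N. mu \<sigma> \<ge> 0"
    and h: "nlip N h L" and L: "L \<ge> 0" and lam: "\<bar>lam\<bar> * (2 * L) \<le> 1"
  shows "EE N mu (\<lambda>x. exp (lam * h x)) \<le> exp (4 * lam^2 * L^2) * EE N mu (\<lambda>x. exp (lam * Pop N P h x))"
proof -
  have "EE N mu (\<lambda>x. exp (lam * h x)) = EE N mu (Pop N P (\<lambda>x. exp (lam * h x)))"
    by (rule EE_Pop[OF chain, symmetric])
  also have "\<dots> \<le> (\<Sum>\<sigma>\<in>Omega N. mu \<sigma> * (exp (4 * lam^2 * L^2) * exp (lam * Pop N P h \<sigma>)))"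
    unfolding EE_def
  proof (rule sum_mono)
    fix \<sigma> assume s: "\<sigma> \<in> Omega N"
    show "mu \<sigma> * Pop N P (\<lambda>x. exp (lam * h x)) \<sigma> \<le> mu \<sigma> * (exp (4 * lam^2 * L^2) * exp (lam * Pop N P h \<sigma>))"
      by (rule mult_left_mono[OF exp_step[OF chain h L lam s]]) (use mu0 s in blast)
  qed
  also have "\<dots> = exp (4 * lam^2 * L^2) * EE N mu (\<lambda>x. exp (lam * Pop N P h x))"
    unfolding EE_def by (simp only: sum_distrib_left mult.left_commute)
  finally show ?thesis .
qed

lemma exp_iter:
  assumes chain: "single_site_chain N mu P" and mu0: "\<forall>\<sigma>\<in>Omega N. mu \<sigma> \<ge> 0"
    and contr: "\<forall>\<sigma>\<in>Omega N. \<forall>\<sigma>'\<in>Omega N. ham N \<sigma> \<sigma>' = 1 \<longrightarrow> W1 N (P \<sigma>) (P \<sigma>') \<le> \<theta>"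
    and th0: "\<theta> \<ge> 0" and th1: "\<theta> \<le> 1"
    and f: "nlip N f L" and L: "L \<ge> 0" and lam: "\<bar>lam\<bar> * (2 * L) \<le> 1"
  shows "EE N mu (\<lambda>x. exp (lam * f x)) \<le>
           exp (4 * lam^2 * L^2 * (\<Sum>t<T. (\<theta>^t)^2)) * EE N mu (\<lambda>x. exp (lam * (Pop N P ^^ T) f x))"
proof (induction T)
  case 0
  then show ?case by simp
next
  case (Suc T)
  let ?g = "(Pop N P ^^ T) f"
  have g: "nlip N ?g (\<theta>^T * L)" by (rule nlip_iter[OF chain contr th0 f L])
  have tT: "\<theta>^T \<le> 1" by (rule power_le_one[OF th0 th1])
  have L': "\<theta>^T * L \<ge> 0" using th0 L by simp
  have "\<theta>^T * L \<le> 1 * L" by (rule mult_right_mono[OF tT L])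
  then have "2 * (\<theta>^T * L) \<le> 2 * L" by simp
  then have "\<bar>lam\<bar> * (2 * (\<theta>^T * L)) \<le> \<bar>lam\<bar> * (2 * L)" by (rule mult_left_mono[OF _ abs_ge_zero])
  then have lam': "\<bar>lam\<bar> * (2 * (\<theta>^T * L)) \<le> 1" using lam by linarith
  have step: "EE N mu (\<lambda>x. exp (lam * ?g x)) \<le> exp (4 * lam^2 * (\<theta>^T * L)^2) * EE N mu (\<lambda>x. exp (lam * Pop N P ?g x))"
    by (rule exp_EE[OF chain mu0 g L' lam'])
  have "EE N mu (\<lambda>x. exp (lam * f x)) \<le>
           exp (4 * lam^2 * L^2 * (\<Sum>t<T. (\<theta>^t)^2)) * EE N mu (\<lambda>x. exp (lam * ?g x))" by (rule Suc.IH)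
  also have "\<dots> \<le> exp (4 * lam^2 * L^2 * (\<Sum>t<T. (\<theta>^t)^2)) * (exp (4 * lam^2 * (\<theta>^T * L)^2) * EE N mu (\<lambda>x. exp (lam * Pop N P ?g x)))"
    by (rule mult_left_mono[OF step]) simp
  also have "\<dots> = exp (4 * lam^2 * L^2 * (\<Sum>t<Suc T. (\<theta>^t)^2)) * EE N mu (\<lambda>x. exp (lam * (Pop N P ^^ Suc T) f x))"
  proof -
    have "4 * lam^2 * L^2 * (\<Sum>t<Suc T. (\<theta>^t)^2) = 4 * lam^2 * L^2 * (\<Sum>t<T. (\<theta>^t)^2) + 4 * lam^2 * (\<theta>^T * L)^2"
      by (simp add: power_mult_distrib algebra_simps)
    then show ?thesis by (simp only: funpow_Pop exp_add mult.assoc)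
  qed
  finally show ?case .
qed

lemma geom_bound:
  fixes \<theta> :: real
  assumes "0 \<le> \<theta>" "\<theta> < 1"
  shows "(\<Sum>t<T. (\<theta>^t)^2) \<le> 1 / (1 - \<theta>^2)"
proof -
  have q0: "0 \<le> \<theta>^2" and q1: "\<theta>^2 < 1" using assms by (auto simp: power_less_one_iff)
  have "(\<Sum>t<T. (\<theta>^t)^2) = (\<Sum>t<T. (\<theta>^2)^t)"
    by (rule sum.cong[OF refl]) (simp add: power_mult[symmetric] mult.commute)
  also have "\<dots> = (1 - (\<theta>^2)^T) / (1 - \<theta>^2)" using q1 by (simp add: sum_gp_strict)
  also have "\<dots> \<le> 1 / (1 - \<theta>^2)" using q0 q1 by (simp add: divide_right_mono)
  finally show ?thesis .
qed

lemma concentrate: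
  assumes chain: "single_site_chain N mu P" and mu0: "\<forall>\<sigma>\<in>Omega N. mu \<sigma> \<ge> 0"
    and mu1: "(\<Sum>\<sigma>\<in>Omega N. mu \<sigma>) = 1"
    and contr: "\<forall>\<sigma>\<in>Omega N. \<forall>\<sigma>'\<in>Omega N. ham N \<sigma> \<sigma>' = 1 \<longrightarrow> W1 N (P \<sigma>) (P \<sigma>') \<le> \<theta>"
    and th0: "\<theta> \<ge> 0" and th1: "\<theta> < 1"
    and f: "nlip N f L" and L: "L \<ge> 0" and lam: "\<bar>lam\<bar> * (2 * L) \<le> 1"
  shows "EE N mu (\<lambda>x. exp (lam * f x)) \<le> exp (4 * lam^2 * L^2 / (1 - \<theta>^2)) * exp (lam * EE N mu f)"
proof -
  define A where "A = 4 * lam^2 * L^2"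
  have A0: "A \<ge> 0" unfolding A_def by simp
  define c where "c = exp (A / (1 - \<theta>^2))"
  define X where "X = (\<lambda>T. c * exp (lam * EE N mu f + \<bar>lam\<bar> * L * real N * \<theta>^T))"
  have bound: "EE N mu (\<lambda>x. exp (lam * f x)) \<le> X T" for T
  proof -
    let ?g = "(Pop N P ^^ T) f"
    have g: "nlip N ?g (\<theta>^T * L)" by (rule nlip_iter[OF chain contr th0 f L])
    have Eg: "EE N mu ?g = EE N mu f" by (rule EE_iter[OF chain])
    have dev: "\<bar>?g x - EE N mu f\<bar> \<le> \<theta>^T * L * real N" if x: "x \<in> Omega N" for x
    proof -
      have "?g x - EE N mu ?g = (\<Sum>y\<in>Omega N. mu y * (?g x - ?g y))"
      proof -
        have "(\<Sum>y\<in>Omega N. mu y * (?g x - ?g y)) = (\<Sum>y\<in>Omega N. mu y) * ?g x - EE N mu ?g"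
          unfolding EE_def by (simp only: right_diff_distrib sum_subtractf sum_distrib_right)
        then show ?thesis using mu1 by simp
      qed
      then have "\<bar>?g x - EE N mu ?g\<bar> \<le> (\<Sum>y\<in>Omega N. \<bar>mu y * (?g x - ?g y)\<bar>)"
        using sum_abs[of "\<lambda>y. mu y * (?g x - ?g y)" "Omega N"] by simp
      also have "\<dots> \<le> (\<Sum>y\<in>Omega N. mu y * (\<theta>^T * L * real N))"
      proof (rule sum_mono)
        fix y assume y: "y \<in> Omega N"
        have m0: "mu y \<ge> 0" using mu0 y by blast
        have "\<bar>?g x - ?g y\<bar> \<le> \<theta>^T * L * ham N x y" by (rule nlip_full[OF g x y])
        also have "\<dots> \<le> \<theta>^T * L * real N" by (rule mult_left_mono[OF ham_le_N]) (use th0 L in simp)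
        finally have "mu y * \<bar>?g x - ?g y\<bar> \<le> mu y * (\<theta>^T * L * real N)" by (rule mult_left_mono[OF _ m0])
        then show "\<bar>mu y * (?g x - ?g y)\<bar> \<le> mu y * (\<theta>^T * L * real N)"
          by (simp only: abs_mult abs_of_nonneg[OF m0])
      qed
      also have "\<dots> = (\<Sum>y\<in>Omega N. mu y) * (\<theta>^T * L * real N)" by (rule sum_distrib_right[symmetric])
      also have "\<dots> = \<theta>^T * L * real N" using mu1 by simp
      finally show ?thesis using Eg by simp
    qed
    have "EE N mu (\<lambda>x. exp (lam * ?g x)) \<le> (\<Sum>x\<in>Omega N. mu x * exp (lam * EE N mu f + \<bar>lam\<bar> * L * real N * \<theta>^T))"
      unfolding EE_def[of N mu "\<lambda>x. exp (lam * ?g x)"]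
    proof (rule sum_mono)
      fix x assume x: "x \<in> Omega N"
      have m0: "mu x \<ge> 0" using mu0 x by blast
      have e1: "lam * ?g x = lam * EE N mu f + lam * (?g x - EE N mu f)" by (simp add: algebra_simps)
      have e2: "lam * (?g x - EE N mu f) \<le> \<bar>lam\<bar> * \<bar>?g x - EE N mu f\<bar>"
        by (metis abs_ge_self abs_mult)
      have e3: "\<bar>lam\<bar> * \<bar>?g x - EE N mu f\<bar> \<le> \<bar>lam\<bar> * (\<theta>^T * L * real N)"
        by (rule mult_left_mono[OF dev[OF x] abs_ge_zero])
      have e4: "\<bar>lam\<bar> * (\<theta>^T * L * real N) = \<bar>lam\<bar> * L * real N * \<theta>^T" by (simp only: mult_ac)
      have "lam * ?g x \<le> lam * EE N mu f + \<bar>lam\<bar> * L * real N * \<theta>^T" using e1 e2 e3 e4 by linarith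
      then have ex: "exp (lam * ?g x) \<le> exp (lam * EE N mu f + \<bar>lam\<bar> * L * real N * \<theta>^T)" by simp
      show "mu x * exp (lam * ?g x) \<le> mu x * exp (lam * EE N mu f + \<bar>lam\<bar> * L * real N * \<theta>^T)"
        by (rule mult_left_mono[OF ex m0])
    qed
    also have "\<dots> = (\<Sum>x\<in>Omega N. mu x) * exp (lam * EE N mu f + \<bar>lam\<bar> * L * real N * \<theta>^T)"
      by (rule sum_distrib_right[symmetric])
    also have "\<dots> = exp (lam * EE N mu f + \<bar>lam\<bar> * L * real N * \<theta>^T)" using mu1 by simp
    finally have ET: "EE N mu (\<lambda>x. exp (lam * ?g x)) \<le> exp (lam * EE N mu f + \<bar>lam\<bar> * L * real N * \<theta>^T)" .
    have "EE N mu (\<lambda>x. exp (lam * f x)) \<le> exp (A * (\<Sum>t<T. (\<theta>^t)^2)) * EE N mu (\<lambda>x. exp (lam * ?g x))"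
      unfolding A_def by (rule exp_iter[OF chain mu0 contr th0 less_imp_le[OF th1] f L lam])
    also have "\<dots> \<le> c * EE N mu (\<lambda>x. exp (lam * ?g x))"
    proof (rule mult_right_mono)
      show "exp (A * (\<Sum>t<T. (\<theta>^t)^2)) \<le> c"
        unfolding c_def using mult_left_mono[OF geom_bound[OF th0 th1, of T] A0] by simp
      show "0 \<le> EE N mu (\<lambda>x. exp (lam * ?g x))"
        unfolding EE_def using mu0 by (intro sum_nonneg mult_nonneg_nonneg) auto
    qed
    also have "\<dots> \<le> X T" unfolding X_def by (rule mult_left_mono[OF ET]) (simp add: c_def)
    finally show ?thesis .
  qed
  have lim: "X \<longlonglongrightarrow> c * exp (lam * EE N mu f + \<bar>lam\<bar> * L * real N * 0)"
    unfolding X_def using th0 th1 by (intro tendsto_intros LIMSEQ_power_zero) simp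
  have "EE N mu (\<lambda>x. exp (lam * f x)) \<le> c * exp (lam * EE N mu f + \<bar>lam\<bar> * L * real N * 0)"
    by (rule LIMSEQ_le_const[OF lim]) (use bound in blast)
  then show ?thesis unfolding c_def A_def by simp
qed

lemma pow_fact_le_exp:
  fixes t :: real assumes t: "t \<ge> 0"
  shows "t ^ n / fact n \<le> exp t"
proof -
  have sm: "summable (\<lambda>k. t ^ k /\<^sub>R fact k)" using exp_converges[of t] by (rule sums_summable)
  have "(\<Sum>k\<in>{n}. t ^ k /\<^sub>R fact k) \<le> (\<Sum>k. t ^ k /\<^sub>R fact k)"
    by (rule sum_le_suminf[OF sm]) (use t in auto)
  also have "\<dots> = exp t" using exp_converges[of t] by (simp add: sums_iff)
  finally show ?thesis by (simp add: divide_inverse mult.commute)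
qed

lemma moment_exp:
  fixes x lam :: real assumes lam: "lam > 0"
  shows "\<bar>x\<bar> ^ p \<le> fact p / lam ^ p * (exp (lam * x) + exp (- lam * x))"
proof -
  define t where "t = lam * \<bar>x\<bar>"
  have t0: "t \<ge> 0" using lam by (simp add: t_def)
  have "t ^ p / fact p \<le> exp t" by (rule pow_fact_le_exp[OF t0])
  moreover have "exp t \<le> exp (lam * x) + exp (- lam * x)"
  proof (cases "x \<ge> 0")
    case True then have "t = lam * x" by (simp add: t_def)
    then show ?thesis by simp
  next
    case False then have "t = - lam * x" by (simp add: t_def)
    then show ?thesis by simp
  qed
  ultimately have le: "t ^ p / fact p \<le> exp (lam * x) + exp (- lam * x)" by linarith
  have "\<bar>x\<bar> ^ p = t ^ p / lam ^ p" using lam by (simp add: t_def power_mult_distrib)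
  also have "\<dots> = fact p / lam ^ p * (t ^ p / fact p)" by (simp add: field_simps)
  also have "\<dots> \<le> fact p / lam ^ p * (exp (lam * x) + exp (- lam * x))"
    by (rule mult_left_mono[OF le]) (use lam in simp)
  finally show ?thesis .
qed

definition Ssum :: "nat \<Rightarrow> spin \<Rightarrow> real" where "Ssum N \<sigma> = (\<Sum>i<N. \<sigma> i)"

definition neg :: "spin \<Rightarrow> spin" where "neg \<sigma> = (\<lambda>i. - \<sigma> i)"

lemma neg_Omega: "\<sigma> \<in> Omega N \<Longrightarrow> neg \<sigma> \<in> Omega N"
  by (auto simp: neg_def Omega_def)

lemma neg_neg: "neg (neg \<sigma>) = \<sigma>" by (simp add: neg_def)

lemma weight_neg: "ising_weight N K (neg \<sigma>) = ising_weight N K \<sigma>"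
  by (simp add: ising_weight_def neg_def)

lemma ising_neg: "ising N K (neg \<sigma>) = ising N K \<sigma>"
  by (simp add: ising_def weight_neg)

lemma Ssum_neg: "Ssum N (neg \<sigma>) = - Ssum N \<sigma>"
  by (simp add: Ssum_def neg_def sum_negf)

lemma EE_Ssum_zero: "EE N (ising N K) (Ssum N) = 0"
proof -
  have "EE N (ising N K) (Ssum N) = (\<Sum>\<sigma>\<in>Omega N. ising N K (neg \<sigma>) * Ssum N (neg \<sigma>))"
    unfolding EE_def
  proof (rule sum.reindex_bij_witness[where i=neg and j=neg])
    fix a assume "a \<in> Omega N"
    then show "neg (neg a) = a" "neg a \<in> Omega N" by (simp_all add: neg_neg neg_Omega)
  next
    fix a assume "a \<in> Omega N"
    then show "neg (neg a) = a" "neg a \<in> Omega N" by (simp_all add: neg_neg neg_Omega)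
  next
    fix a assume "a \<in> Omega N"
    show "ising N K (neg (neg a)) * Ssum N (neg (neg a)) = ising N K a * Ssum N a" by (simp only: neg_neg)
  qed
  also have "\<dots> = - EE N (ising N K) (Ssum N)"
    unfolding EE_def by (simp only: ising_neg Ssum_neg mult_minus_right sum_negf)
  finally show ?thesis by simp
qed

lemma nlip_Ssum: "nlip N (Ssum N) 2"
  unfolding nlip_def
proof (intro ballI impI)
  fix x y assume x: "x \<in> Omega N" and y: "y \<in> Omega N" and h: "ham N x y = 1"
  have "\<bar>Ssum N x - Ssum N y\<bar> = \<bar>\<Sum>i<N. x i - y i\<bar>" by (simp add: Ssum_def sum_subtractf)
  also have "\<dots> \<le> (\<Sum>i<N. \<bar>x i - y i\<bar>)" by (rule sum_abs)
  also have "\<dots> = (\<Sum>i\<in>D N x y. \<bar>x i - y i\<bar>)"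
    by (rule sum.mono_neutral_right) (auto simp: D_def)
  also have "\<dots> \<le> (\<Sum>i\<in>D N x y. 2)"
  proof (rule sum_mono)
    fix i assume "i \<in> D N x y"
    have "\<bar>x i\<bar> \<le> 1" "\<bar>y i\<bar> \<le> 1" using Omega_abs[OF x] Omega_abs[OF y] by auto
    then show "\<bar>x i - y i\<bar> \<le> 2" by linarith
  qed
  also have "\<dots> = 2 * ham N x y" by (simp add: ham_D)
  finally show "\<bar>Ssum N x - Ssum N y\<bar> \<le> 2" using h by simp
qed

lemma neighbors_exist: "N \<ge> 1 \<Longrightarrow> \<exists>x\<in>Omega N. \<exists>y\<in>Omega N. ham N x y = 1"
proof -
  assume N: "N \<ge> 1"
  define y where "y = (one N)(0 := -1)"
  have y: "y \<in> Omega N" using N by (auto simp: y_def one_def Omega_def)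
  have "D N (one N) y = {0}" using N by (auto simp: D_def y_def one_def)
  then have "ham N (one N) y = 1" by (simp add: ham_D)
  then show ?thesis using one_Omega y by blast
qed


lemma tensor_expect:
  "(\<Sum>\<sigma>\<in>Omega N. ising N J \<sigma> * tensor_poly N p b \<sigma>) =
   (\<Sum>xs\<in>tuples N p. b xs * (\<Sum>\<sigma>\<in>Omega N. ising N J \<sigma> * mon xs \<sigma>))"
proof -
  have tp: "tensor_poly N p b \<sigma> = (\<Sum>xs\<in>tuples N p. b xs * mon xs \<sigma>)" for \<sigma>
    unfolding tensor_poly_def
  proof (rule sum.cong[OF refl])
    fix xs assume "xs \<in> tuples N p"
    then have "length xs = p" by (simp add: tuples_def)
    then show "b xs * (\<Prod>k<p. \<sigma> (xs ! k)) = b xs * mon xs \<sigma>" using mon_nth[of \<sigma> xs] by simp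
  qed
  have "(\<Sum>\<sigma>\<in>Omega N. ising N J \<sigma> * tensor_poly N p b \<sigma>) =
        (\<Sum>\<sigma>\<in>Omega N. \<Sum>xs\<in>tuples N p. ising N J \<sigma> * (b xs * mon xs \<sigma>))"
    by (simp only: tp sum_distrib_left)
  also have "\<dots> = (\<Sum>xs\<in>tuples N p. \<Sum>\<sigma>\<in>Omega N. ising N J \<sigma> * (b xs * mon xs \<sigma>))"
    by (rule sum.swap)
  also have "\<dots> = (\<Sum>xs\<in>tuples N p. b xs * (\<Sum>\<sigma>\<in>Omega N. ising N J \<sigma> * mon xs \<sigma>))"
    by (simp only: sum_distrib_left mult.left_commute)
  finally show ?thesis .
qed

lemma mu_moment_eq:
  "(\<Sum>xs\<in>tuples N p. \<Sum>\<sigma>\<in>Omega N. mu \<sigma> * mon xs \<sigma>) = (\<Sum>\<sigma>\<in>Omega N. mu \<sigma> * Ssum N \<sigma> ^ p)"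
proof -
  have "(\<Sum>xs\<in>tuples N p. \<Sum>\<sigma>\<in>Omega N. mu \<sigma> * mon xs \<sigma>) = (\<Sum>\<sigma>\<in>Omega N. \<Sum>xs\<in>tuples N p. mu \<sigma> * mon xs \<sigma>)"
    by (rule sum.swap)
  also have "\<dots> = (\<Sum>\<sigma>\<in>Omega N. mu \<sigma> * (\<Sum>xs\<in>tuples N p. mon xs \<sigma>))"
    by (simp only: sum_distrib_left)
  also have "\<dots> = (\<Sum>\<sigma>\<in>Omega N. mu \<sigma> * Ssum N \<sigma> ^ p)"
    by (simp only: sum_tuples_mon Ssum_def)
  finally show ?thesis .
qed

theorem lemma3:
  fixes p :: nat and \<alpha> :: real
  assumes "p \<ge> 1" and "\<alpha> > 0"
  shows "\<exists>C>0. \<forall>(N::nat) (J::nat \<Rightarrow> nat \<Rightarrow> real) (b::nat list \<Rightarrow> real).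
           contracting N (\<lambda>i j. \<bar>J i j\<bar>) (1 - \<alpha> / real N) \<longrightarrow>
           \<bar>\<Sum>\<sigma>\<in>Omega N. ising N J \<sigma> * tensor_poly N p b \<sigma>\<bar>
             \<le> C * tensor_sup N p b * real N powr (real p / 2)"
proof -
  define C where "C = 2 * fact p * 4^p * exp (1/\<alpha>)"
  have Cpos: "C > 0" unfolding C_def by simp
  have main: "\<bar>\<Sum>\<sigma>\<in>Omega N. ising N J \<sigma> * tensor_poly N p b \<sigma>\<bar>
             \<le> C * tensor_sup N p b * real N powr (real p / 2)"
    if hc: "contracting N (\<lambda>i j. \<bar>J i j\<bar>) (1 - \<alpha> / real N)" for N J b
  proof (cases "N = 0")
    case True
    have "tuples N p = {}"
    proof (rule ccontr)
      assume "tuples N p \<noteq> {}"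
      then obtain xs where "xs \<in> tuples N p" by blast
      then have "length xs = p" "set xs \<subseteq> {}" using True by (auto simp: tuples_def)
      then show False using assms(1) by auto
    qed
    then have "\<And>\<sigma>. tensor_poly N p b \<sigma> = 0" by (simp add: tensor_poly_def)
    then show ?thesis using True by simp
  next
    case False
    then have N1: "N \<ge> 1" by simp
    have Npos: "real N > 0" using N1 by simp
    define \<theta> where "\<theta> = 1 - \<alpha> / real N"
    define mu where "mu = ising N (\<lambda>i j. \<bar>J i j\<bar>)"
    obtain P where th1: "\<theta> < 1" and chain: "single_site_chain N mu P"
      and contr: "\<forall>\<sigma>\<in>Omega N. \<forall>\<sigma>'\<in>Omega N. ham N \<sigma> \<sigma>' = 1 \<longrightarrow> W1 N (P \<sigma>) (P \<sigma>') \<le> \<theta>"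
      using hc unfolding contracting_def \<theta>_def mu_def by blast
    have th0: "\<theta> \<ge> 0"
    proof -
      obtain x y where x: "x \<in> Omega N" and y: "y \<in> Omega N" and h: "ham N x y = 1"
        using neighbors_exist[OF N1] by blast
      have "W1 N (P x) (P y) \<ge> 0" by (rule W1_nonneg[OF chain x y])
      moreover have "W1 N (P x) (P y) \<le> \<theta>" using contr x y h by blast
      ultimately show ?thesis by linarith
    qed
    have mu0: "\<forall>\<sigma>\<in>Omega N. mu \<sigma> \<ge> 0" unfolding mu_def using ising_pos less_imp_le by blast
    have mu1: "(\<Sum>\<sigma>\<in>Omega N. mu \<sigma>) = 1" unfolding mu_def by (rule ising_sum)
    have E0: "EE N mu (Ssum N) = 0" unfolding mu_def by (rule EE_Ssum_zero)
    define lam where "lam = 1 / (4 * sqrt (real N))"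
    have sN: "sqrt (real N) \<ge> 1" using N1 by simp
    have lam0: "lam > 0" unfolding lam_def using sN by simp
    have "\<bar>lam\<bar> * (2 * 2) = 1 / sqrt (real N)" unfolding lam_def using sN by simp
    also have "\<dots> \<le> 1" using sN by simp
    finally have lamb: "\<bar>lam\<bar> * (2 * 2) \<le> 1" .
    then have lamb': "\<bar>-lam\<bar> * (2 * 2) \<le> 1" by simp
    have ex: "4 * lam^2 * 2^2 / (1 - \<theta>^2) \<le> 1 / \<alpha>"
    proof -
      have l2: "4 * lam^2 * 2^2 = 1 / real N"
        unfolding lam_def using Npos by (simp add: power_divide power_mult_distrib)
      have d: "1 - \<theta> = \<alpha> / real N" unfolding \<theta>_def by simp
      have dpos: "1 - \<theta> > 0" using th1 by simp
      have "\<theta>^2 \<le> \<theta>" using th0 th1 by (simp add: power2_eq_square mult_left_le_one_le)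
      then have dd: "1 - \<theta> \<le> 1 - \<theta>^2" by simp
      have "1 / real N / (1 - \<theta>^2) \<le> 1 / real N / (1 - \<theta>)"
      proof (rule divide_left_mono[OF dd])
        show "0 \<le> 1 / real N" using Npos by simp
        have "1 - \<theta>^2 > 0" using dd dpos by linarith
        then show "0 < (1 - \<theta>^2) * (1 - \<theta>)" using dpos by (rule mult_pos_pos)
      qed
      also have "\<dots> = 1 / \<alpha>" unfolding d using Npos assms(2) by simp
      finally show ?thesis unfolding l2 .
    qed
    have E1: "EE N mu (\<lambda>x. exp (lam * Ssum N x)) \<le> exp (1 / \<alpha>)"
    proof -
      have "EE N mu (\<lambda>x. exp (lam * Ssum N x)) \<le> exp (4 * lam^2 * 2^2 / (1 - \<theta>^2)) * exp (lam * EE N mu (Ssum N))"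
        by (rule concentrate[OF chain mu0 mu1 contr th0 th1 nlip_Ssum _ lamb]) simp
      also have "\<dots> = exp (4 * lam^2 * 2^2 / (1 - \<theta>^2))" using E0 by simp
      also have "\<dots> \<le> exp (1 / \<alpha>)" using ex by simp
      finally show ?thesis .
    qed
    have E2: "EE N mu (\<lambda>x. exp (- lam * Ssum N x)) \<le> exp (1 / \<alpha>)"
    proof -
      have "EE N mu (\<lambda>x. exp (- lam * Ssum N x)) \<le> exp (4 * (-lam)^2 * 2^2 / (1 - \<theta>^2)) * exp (- lam * EE N mu (Ssum N))"
        by (rule concentrate[OF chain mu0 mu1 contr th0 th1 nlip_Ssum _ lamb']) simp
      also have "\<dots> = exp (4 * lam^2 * 2^2 / (1 - \<theta>^2))" using E0 by simp
      also have "\<dots> \<le> exp (1 / \<alpha>)" using ex by simp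
      finally show ?thesis .
    qed
    have lamp: "fact p / lam ^ p = fact p * 4^p * real N powr (real p / 2)"
    proof -
      have "1 / lam = 4 * sqrt (real N)" unfolding lam_def by simp
      then have "(1 / lam) ^ p = 4^p * sqrt (real N) ^ p" by (simp add: power_mult_distrib)
      also have "sqrt (real N) ^ p = real N powr (real p / 2)"
        using Npos by (simp add: powr_half_sqrt[symmetric] powr_power)
      finally have "(1 / lam) ^ p = 4^p * real N powr (real p / 2)" .
      then have e: "1 / lam ^ p = 4^p * real N powr (real p / 2)" by (simp only: power_one_over)
      have "fact p / lam ^ p = fact p * (1 / lam ^ p)" by simp
      then show ?thesis by (simp only: e mult.assoc)
    qed
    have mom: "(\<Sum>\<sigma>\<in>Omega N. mu \<sigma> * Ssum N \<sigma> ^ p) \<le> C * real N powr (real p / 2)"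
    proof -
      have "(\<Sum>\<sigma>\<in>Omega N. mu \<sigma> * Ssum N \<sigma> ^ p)
          \<le> (\<Sum>\<sigma>\<in>Omega N. mu \<sigma> * (fact p / lam ^ p * (exp (lam * Ssum N \<sigma>) + exp (- lam * Ssum N \<sigma>))))"
      proof (rule sum_mono)
        fix \<sigma> assume s: "\<sigma> \<in> Omega N"
        have m0: "mu \<sigma> \<ge> 0" using mu0 s by blast
        have "Ssum N \<sigma> ^ p \<le> \<bar>Ssum N \<sigma>\<bar> ^ p" using abs_ge_self[of "Ssum N \<sigma> ^ p"] by (simp only: power_abs)
        also have "\<dots> \<le> fact p / lam ^ p * (exp (lam * Ssum N \<sigma>) + exp (- lam * Ssum N \<sigma>))"
          by (rule moment_exp[OF lam0])
        finally show "mu \<sigma> * Ssum N \<sigma> ^ p \<le> mu \<sigma> * (fact p / lam ^ p * (exp (lam * Ssum N \<sigma>) + exp (- lam * Ssum N \<sigma>)))"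
          by (rule mult_left_mono[OF _ m0])
      qed
      also have "\<dots> = fact p / lam ^ p * (EE N mu (\<lambda>x. exp (lam * Ssum N x)) + EE N mu (\<lambda>x. exp (- lam * Ssum N x)))"
        unfolding EE_def by (simp only: sum_distrib_left sum.distrib distrib_left mult.left_commute)
      also have "\<dots> \<le> fact p / lam ^ p * (exp (1 / \<alpha>) + exp (1 / \<alpha>))"
        by (rule mult_left_mono) (use E1 E2 lam0 in auto)
      also have "\<dots> = C * real N powr (real p / 2)"
        unfolding lamp C_def by simp
      finally show ?thesis .
    qed
    define M where "M = tensor_sup N p b"
    have Mb: "\<bar>b xs\<bar> \<le> M" if "xs \<in> tuples N p" for xs
      unfolding M_def tensor_sup_def using that by (intro Max_ge) auto
    have "replicate p 0 \<in> tuples N p" using N1 by (auto simp: tuples_def)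
    then have M0: "M \<ge> 0" using Mb[of "replicate p 0"] by linarith
    have "\<bar>\<Sum>\<sigma>\<in>Omega N. ising N J \<sigma> * tensor_poly N p b \<sigma>\<bar>
          = \<bar>\<Sum>xs\<in>tuples N p. b xs * (\<Sum>\<sigma>\<in>Omega N. ising N J \<sigma> * mon xs \<sigma>)\<bar>"
      by (simp only: tensor_expect)
    also have "\<dots> \<le> (\<Sum>xs\<in>tuples N p. \<bar>b xs * (\<Sum>\<sigma>\<in>Omega N. ising N J \<sigma> * mon xs \<sigma>)\<bar>)"
      by (rule sum_abs)
    also have "\<dots> \<le> (\<Sum>xs\<in>tuples N p. M * (\<Sum>\<sigma>\<in>Omega N. mu \<sigma> * mon xs \<sigma>))"
    proof (rule sum_mono)
      fix xs assume xs: "xs \<in> tuples N p"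
      have g: "\<bar>\<Sum>\<sigma>\<in>Omega N. ising N J \<sigma> * mon xs \<sigma>\<bar> \<le> (\<Sum>\<sigma>\<in>Omega N. mu \<sigma> * mon xs \<sigma>)"
        unfolding mu_def by (rule ginibre)
      have "\<bar>b xs * (\<Sum>\<sigma>\<in>Omega N. ising N J \<sigma> * mon xs \<sigma>)\<bar> = \<bar>b xs\<bar> * \<bar>\<Sum>\<sigma>\<in>Omega N. ising N J \<sigma> * mon xs \<sigma>\<bar>"
        by (rule abs_mult)
      also have "\<dots> \<le> M * (\<Sum>\<sigma>\<in>Omega N. mu \<sigma> * mon xs \<sigma>)"
        by (rule mult_mono[OF Mb[OF xs] g M0 abs_ge_zero])
      finally show "\<bar>b xs * (\<Sum>\<sigma>\<in>Omega N. ising N J \<sigma> * mon xs \<sigma>)\<bar> \<le> M * (\<Sum>\<sigma>\<in>Omega N. mu \<sigma> * mon xs \<sigma>)" .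
    qed
    also have "\<dots> = M * (\<Sum>\<sigma>\<in>Omega N. mu \<sigma> * Ssum N \<sigma> ^ p)"
      by (simp only: sum_distrib_left[symmetric] mu_moment_eq)
    also have "\<dots> \<le> M * (C * real N powr (real p / 2))"
      by (rule mult_left_mono[OF mom M0])
    also have "\<dots> = C * tensor_sup N p b * real N powr (real p / 2)"
      unfolding M_def by (simp only: mult_ac)
    finally show ?thesis .
  qed
  show ?thesis using Cpos main by blast
qed

end
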